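(* Let $\varepsilon,\delta>0$ be constants and let $u_\pm$ be real numbers with $u_->u_+$ and \[ 0<\frac{\delta(u_--u_+)}{2\varepsilon^2}\le\frac14 . \] Let $\tilde u$ be a monotone viscous-dispersive shock of the KdV--Burgers equation $u_t+(u^2/2)_x=\varepsilon u_{xx}-\delta u_{xxx}$ connecting $u_-$ and $u_+$, normalized so that $\tilde u(0)=\frac{u_-+u_+}{2}$. Set $\underline\lambda=\sqrt2-1$ and $\bar\lambda=1$. Then \[ \frac{u_--u_+}{2}e^{-\frac{\bar\lambda(u_--u_+)|x|}{\varepsilon}}\le u_--\tilde u(x)\le\frac{u_--u_+}{2}e^{-\frac{\underline\lambda(u_--u_+)|x|}{2\varepsilon}}\qquad\forall x\le0, \] \[ \frac{u_--u_+}{2}e^{-\frac{\bar\lambda(u_--u_+)|x|}{\varepsilon}}\le \tilde u(x)-u_+\le\frac{u_--u_+}{2}e^{-\frac{\underline\lambda(u_--u_+)|x|}{2\varepsilon}}\qquad\forall x\ge0, \] \[ \frac{\underline\lambda(u_--u_+)^2}{4\varepsilon}e^{-\frac{\bar\lambda(u_--u_+)|x|}{\varepsilon}}\le-\tilde u'(x)\le\frac{\bar\lambda(u_--u_+)^2}{2\varepsilon}e^{-\frac{\underline\lambda(u_--u_+)|x|}{2\varepsilon}}\qquad\forall x\in\mathbb R . \]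
   Context: A viscous-dispersive shock connecting $u_-$ and $u_+$ (with $u_->u_+$) is a smooth function $\tilde u:\mathbb R\to\mathbb R$ such that $\tilde u(x-\sigma t)$ solves $u_t+(u^2/2)_x=\varepsilon u_{xx}-\delta u_{xxx}$, i.e. $-\sigma\tilde u'+(\tilde u^2/2)'=\varepsilon\tilde u''-\delta\tilde u'''$, with $\tilde u(\xi)\to u_\pm$ and $\tilde u'(\xi)\to0$ as $\xi\to\pm\infty$, where $\sigma=\frac{u_-+u_+}{2}$. *)

theory Defs
  imports "HOL-Analysis.Analysis"
begin

text \<open>Viscous-dispersive shock of KdV-Burgers connecting um (left state) and up (right state),
  with speed sigma = (um + up)/2: a smooth profile solving the travelling wave ODE
  -sigma u' + (u^2/2)' = eps u'' - delta u''' with the stated end behaviour.\<close>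
definition vd_shock :: "real \<Rightarrow> real \<Rightarrow> real \<Rightarrow> real \<Rightarrow> (real \<Rightarrow> real) \<Rightarrow> bool" where
  "vd_shock eps delta um up u \<longleftrightarrow>
     (\<forall>n x. ((deriv ^^ n) u) differentiable (at x)) \<and>
     (\<forall>\<xi>. - ((um + up) / 2) * deriv u \<xi> + u \<xi> * deriv u \<xi>
            = eps * (deriv ^^ 2) u \<xi> - delta * (deriv ^^ 3) u \<xi>) \<and>
     (u \<longlongrightarrow> um) at_bot \<and> (u \<longlongrightarrow> up) at_top \<and>
     (deriv u \<longlongrightarrow> 0) at_bot \<and> (deriv u \<longlongrightarrow> 0) at_top"

end

theory Submission
  imports Defs
begin

lemma barrier:
  fixes F F' :: "real \<Rightarrow> real"
  assumes D: "\<And>x. (F has_real_derivative F' x) (at x)"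
    and pos: "\<And>x. F x > 0 \<Longrightarrow> F' x > 0"
    and lim: "(F \<longlongrightarrow> 0) at_top"
  shows "F x \<le> 0"
proof (rule ccontr)
  assume "\<not> F x \<le> 0" hence Fx: "F x > 0" by simp
  have "eventually (\<lambda>t. F t < F x) at_top" using lim Fx by (rule order_tendstoD(2))
  then obtain N where N: "\<And>t. t \<ge> N \<Longrightarrow> F t < F x" by (auto simp: eventually_at_top_linorder)
  define x1 where "x1 = max N (x+1)"
  have x1: "x < x1" "F x1 < F x" using N unfolding x1_def by auto
  have cont: "continuous_on {x..x1} F" using D
    by (meson DERIV_isCont continuous_at_imp_continuous_on)
  obtain t where t: "t \<in> {x..x1}" "\<And>y. y \<in> {x..x1} \<Longrightarrow> F y \<le> F t"
    using continuous_attains_sup[OF compact_Icc _ cont] x1 by auto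
  have Ft: "F t \<ge> F x" using t x1 by auto
  hence "F' t > 0" using pos Fx by auto
  then obtain d where d: "d>0" "\<And>h. h>0 \<Longrightarrow> h<d \<Longrightarrow> F t < F (t+h)"
    using DERIV_pos_inc_right[OF D] by blast
  have "t \<noteq> x1" using Ft x1 by auto
  hence tx1: "t < x1" using t by auto
  define h where "h = min (d/2) ((x1-t)/2)"
  have h0: "h \<le> (x1-t)/2" "h \<le> d/2" "h > 0" using d tx1 unfolding h_def
    by (simp_all only: min.cobounded1 min.cobounded2) (simp add: min_def)
  have h: "h > 0" "h < d" "t + h \<in> {x..x1}" using h0 d tx1 t by auto
  show False using d(2)[OF h(1,2)] t(2)[OF h(3)] by simp
qed

lemma deriv_lim_zero:
  fixes g g' :: "real \<Rightarrow> real"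
  assumes D: "\<And>x. (g has_real_derivative g' x) (at x)"
    and l1: "(g' \<longlongrightarrow> L) at_top" and l2: "(g \<longlongrightarrow> c) at_top"
  shows "L = 0"
proof -
  have "filterlim (\<lambda>x. 1 + x) at_top (at_top :: real filter)"
    by (rule filterlim_tendsto_add_at_top[OF tendsto_const filterlim_ident])
  hence "((\<lambda>x. g (1 + x)) \<longlongrightarrow> c) at_top" using l2 by (rule filterlim_compose[rotated])
  hence "((\<lambda>x. g (1 + x) - g x) \<longlongrightarrow> c - c) at_top"
    using l2 by (intro tendsto_diff)
  hence lim: "((\<lambda>x. g (x + 1) - g x) \<longlongrightarrow> 0) at_top"
    by (simp add: add.commute)
  have mvt: "\<exists>z. x < z \<and> g (x+1) - g x = g' z" for x
    using MVT2[of x "x+1" g g'] D by force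
  show ?thesis
  proof (rule ccontr)
    assume "L \<noteq> 0"
    then consider "L > 0" | "L < 0" by linarith
    then show False
    proof cases
      case 1
      have "eventually (\<lambda>t. g' t > L/2) at_top" using l1 1 by (intro order_tendstoD(1)) auto
      then obtain N where N: "\<And>t. t \<ge> N \<Longrightarrow> g' t > L/2" by (auto simp: eventually_at_top_linorder)
      have "eventually (\<lambda>x. L/2 \<le> g (x + 1) - g x) at_top"
        unfolding eventually_at_top_linorder
      proof (intro exI allI impI)
        fix x assume "x \<ge> N"
        then obtain z where "x < z" "g (x+1) - g x = g' z" using mvt by blast
        with N[of z] \<open>x \<ge> N\<close> show "L/2 \<le> g (x + 1) - g x" by auto
      qed
      from tendsto_lowerbound[OF lim this] 1 show False by simp
    next
      case 2
      have "eventually (\<lambda>t. g' t < L/2) at_top" using l1 2 by (intro order_tendstoD(2)) auto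
      then obtain N where N: "\<And>t. t \<ge> N \<Longrightarrow> g' t < L/2" by (auto simp: eventually_at_top_linorder)
      have "eventually (\<lambda>x. L/2 \<ge> g (x + 1) - g x) at_top"
        unfolding eventually_at_top_linorder
      proof (intro exI allI impI)
        fix x assume "x \<ge> N"
        then obtain z where "x < z" "g (x+1) - g x = g' z" using mvt by blast
        with N[of z] \<open>x \<ge> N\<close> show "L/2 \<ge> g (x + 1) - g x" by auto
      qed
      from tendsto_upperbound[OF lim this] 2 show False by simp
    qed
  qed
qed


lemma part2:
  fixes eps delta a s lam :: real and u u1 u2 :: "real \<Rightarrow> real"
  assumes e: "eps > 0" and dl: "delta > 0" and apos: "a > 0" and mu: "delta * a \<le> eps^2/4"
    and D0: "\<And>x. (u has_real_derivative u1 x) (at x)"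
    and D1: "\<And>x. (u1 has_real_derivative u2 x) (at x)"
    and ode2: "\<And>x. delta * u2 x = eps * u1 x + (a^2 - (u x - s)^2)/2"
    and bnd: "\<And>x. s - a \<le> u x \<and> u x \<le> s + a"
    and lu: "(u \<longlongrightarrow> s - a) at_top" and lu1: "(u1 \<longlongrightarrow> 0) at_top"
    and lam: "lam = sqrt 2 - 1"
  shows "lam * (a^2 - (u x - s)^2) / eps \<le> - u1 x \<and> - u1 x \<le> (a^2 - (u x - s)^2) / eps"
proof -
  have lam2: "lam^2 = 3 - 2 * sqrt 2" unfolding lam by (simp add: power2_diff)
  have lam0: "lam > 0" and lam1: "lam < 1"
    using lam sqrt2_less_2 by (auto simp: real_less_rsqrt)
  have lamid: "1/2 - lam - lam^2/2 = 0" using lam2 lam by simp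
  have common: "s - a \<le> u x" "u x \<le> s + a" "delta * (u x - s) \<le> eps^2/4"
    "- (eps^2/4) \<le> delta * (u x - s)" "a^2 - (u x - s)^2 \<ge> 0" for x
  proof -
    show 1: "s - a \<le> u x" "u x \<le> s + a" using bnd by auto
    have "delta * (u x - s) \<le> delta * a" using 1 dl by (intro mult_left_mono) auto
    thus "delta * (u x - s) \<le> eps^2/4" using mu by simp
    have "delta * (-a) \<le> delta * (u x - s)" using 1 dl by (intro mult_left_mono) auto
    thus "- (eps^2/4) \<le> delta * (u x - s)" using mu by simp
    have "a^2 - (u x - s)^2 = (a - (u x - s)) * (a + (u x - s))" by (simp add: power2_eq_square algebra_simps)
    also have "\<dots> \<ge> 0" using 1 by (intro mult_nonneg_nonneg) auto
    finally show "a^2 - (u x - s)^2 \<ge> 0" .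
  qed
  define F1 where "F1 x = - eps * u1 x - (a^2 - (u x - s)^2)" for x
  define F1' where "F1' x = - eps * u2 x + 2 * (u x - s) * u1 x" for x
  have dF1: "(F1 has_real_derivative F1' x) (at x)" for x
    unfolding F1_def[abs_def] F1'_def
    by (auto intro!: derivative_eq_intros D0 D1)
  have pF1: "F1' x > 0" if "F1 x > 0" for x
  proof -
    define w where "w = u x - s"
    define y where "y = - u1 x"
    define Q where "Q = a^2 - w^2"
    define c where "c = eps^2 - 2 * delta * w"
    have Q0: "Q \<ge> 0" using common(5)[of x] unfolding Q_def w_def .
    have c0: "c \<ge> eps^2/2" using common(3)[of x] unfolding c_def w_def by simp
    have "eps^2 > 0" using e by simp
    hence cpos: "c > 0" using c0 by linarith
    have "Q < eps * y" using that unfolding F1_def Q_def w_def y_def by simp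
    hence yQ: "Q / eps < y" using e by (simp add: pos_divide_less_eq mult.commute)
    have "c * (Q / eps) < c * y" using mult_strict_left_mono[OF yQ cpos] .
    moreover have "c * (Q / eps) - eps * Q / 2 = Q * (c - eps^2/2) / eps"
      using e by (simp add: field_simps power2_eq_square)
    moreover have "Q * (c - eps^2/2) / eps \<ge> 0" using Q0 c0 e by simp
    moreover have "delta * F1' x = c * y - eps * Q / 2"
    proof -
      have "delta * F1' x = - eps * (delta * u2 x) + 2 * delta * w * u1 x"
        unfolding F1'_def w_def by (simp add: algebra_simps)
      also have "\<dots> = c * y - eps * Q / 2"
        unfolding ode2 c_def y_def Q_def w_def by (simp add: field_simps power2_eq_square)
      finally show ?thesis .
    qed
    ultimately have "delta * F1' x > 0" by linarith
    thus ?thesis using dl by (simp add: zero_less_mult_iff)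
  qed
  have lF1: "(F1 \<longlongrightarrow> 0) at_top"
  proof -
    have "(F1 \<longlongrightarrow> - eps * 0 - (a^2 - (s - a - s)^2)) at_top"
      unfolding F1_def[abs_def] by (intro tendsto_intros lu lu1)
    thus ?thesis by simp
  qed
  have up: "F1 x \<le> 0" using barrier[OF dF1 pF1 lF1] .
  define F2 where "F2 x = lam * (a^2 - (u x - s)^2) + eps * u1 x" for x
  define F2' where "F2' x = - 2 * lam * (u x - s) * u1 x + eps * u2 x" for x
  have dF2: "(F2 has_real_derivative F2' x) (at x)" for x
    unfolding F2_def[abs_def] F2'_def
    by (auto intro!: derivative_eq_intros D0 D1)
  have pF2: "F2' x > 0" if "F2 x > 0" for x
  proof -
    define w where "w = u x - s"
    define y where "y = - u1 x"
    define Q where "Q = a^2 - w^2"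
    define c where "c = eps^2 - 2 * lam * delta * w"
    have Q0: "Q \<ge> 0" using common(5)[of x] unfolding Q_def w_def .
    have "lam * (delta * w) \<le> lam * (eps^2/4)"
      using common(3)[of x] lam0 unfolding w_def by (intro mult_left_mono) auto
    moreover have "lam * (eps^2/4) < eps^2/2" using lam1 e by (simp add: power2_eq_square)
    ultimately have cpos: "c > 0" unfolding c_def by (simp add: algebra_simps)
    have "lam^2 * (- (eps^2/4)) \<le> lam^2 * (delta * w)"
      using common(4)[of x] unfolding w_def by (intro mult_left_mono) auto
    hence key: "eps^2/2 - lam * eps^2 + 2 * lam^2 * delta * w \<ge> 0"
    proof -
      assume h: "lam^2 * (- (eps^2/4)) \<le> lam^2 * (delta * w)"
      have "eps^2/2 - lam * eps^2 + 2 * lam^2 * delta * w \<ge> eps^2/2 - lam * eps^2 + 2 * (lam^2 * (- (eps^2/4)))"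
        using h by (simp add: algebra_simps)
      also have "eps^2/2 - lam * eps^2 + 2 * (lam^2 * (- (eps^2/4))) = eps^2 * (1/2 - lam - lam^2/2)"
        by (simp add: algebra_simps)
      also have "\<dots> = 0" using lamid by simp
      finally show ?thesis by simp
    qed
    have "eps * y < lam * Q" using that unfolding F2_def Q_def w_def y_def by simp
    hence yQ: "y < lam * Q / eps" using e by (simp add: pos_less_divide_eq mult.commute)
    have "c * y < c * (lam * Q / eps)" using mult_strict_left_mono[OF yQ cpos] .
    moreover have "eps * Q / 2 - c * (lam * Q / eps) = Q * (eps^2/2 - lam * eps^2 + 2 * lam^2 * delta * w) / eps"
      using e unfolding c_def by (simp add: field_simps power2_eq_square)
    moreover have "Q * (eps^2/2 - lam * eps^2 + 2 * lam^2 * delta * w) / eps \<ge> 0" using Q0 key e by simp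
    moreover have "delta * F2' x = eps * Q / 2 - c * y"
    proof -
      have "delta * F2' x = - 2 * lam * delta * w * u1 x + eps * (delta * u2 x)"
        unfolding F2'_def w_def by (simp add: algebra_simps)
      also have "\<dots> = eps * Q / 2 - c * y"
        unfolding ode2 c_def y_def Q_def w_def by (simp add: field_simps power2_eq_square)
      finally show ?thesis .
    qed
    ultimately have "delta * F2' x > 0" by linarith
    thus ?thesis using dl by (simp add: zero_less_mult_iff)
  qed
  have lF2: "(F2 \<longlongrightarrow> 0) at_top"
  proof -
    have "(F2 \<longlongrightarrow> lam * (a^2 - (s - a - s)^2) + eps * 0) at_top"
      unfolding F2_def[abs_def] by (intro tendsto_intros lu lu1)
    thus ?thesis by simp
  qed
  have lo: "F2 x \<le> 0" using barrier[OF dF2 pF2 lF2] .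
  have "lam * (a^2 - (u x - s)^2) \<le> - u1 x * eps" using lo unfolding F2_def by (simp add: algebra_simps)
  hence 1: "lam * (a^2 - (u x - s)^2) / eps \<le> - u1 x" using e by (simp add: pos_divide_le_eq)
  have "- u1 x * eps \<le> (a^2 - (u x - s)^2)" using up unfolding F1_def by (simp add: algebra_simps)
  hence 2: "- u1 x \<le> (a^2 - (u x - s)^2) / eps" using e by (simp add: pos_le_divide_eq)
  show ?thesis using 1 2 by simp
qed


lemma exp_cmp_inc:
  fixes f f' :: "real \<Rightarrow> real"
  assumes D: "\<And>t. (f has_real_derivative f' t) (at t)" and xy: "x \<le> y"
    and h: "\<And>t. x \<le> t \<Longrightarrow> t \<le> y \<Longrightarrow> f' t + k * f t \<ge> 0"
  shows "f x * exp (k * x) \<le> f y * exp (k * y)"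
proof -
  define g where "g t = f t * exp (k * t)" for t
  have dg: "(g has_real_derivative (f' t + k * f t) * exp (k * t)) (at t)" for t
    unfolding g_def[abs_def] by (auto intro!: derivative_eq_intros D simp: algebra_simps)
  have "g x \<le> g y"
  proof (rule DERIV_nonneg_imp_increasing_open[OF xy])
    fix t assume "x < t" "t < y"
    thus "\<exists>z. (g has_real_derivative z) (at t) \<and> 0 \<le> z" using dg h by (intro exI[of _ "(f' t + k * f t) * exp (k * t)"]) auto
  next
    show "continuous_on {x..y} g" using dg by (meson DERIV_isCont continuous_at_imp_continuous_on)
  qed
  thus ?thesis unfolding g_def .
qed

lemma exp_cmp_dec:
  fixes f f' :: "real \<Rightarrow> real"
  assumes D: "\<And>t. (f has_real_derivative f' t) (at t)" and xy: "x \<le> y"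
    and h: "\<And>t. x \<le> t \<Longrightarrow> t \<le> y \<Longrightarrow> f' t + k * f t \<le> 0"
  shows "f x * exp (k * x) \<ge> f y * exp (k * y)"
proof -
  have D': "((\<lambda>t. - f t) has_real_derivative - f' t) (at t)" for t using D by (intro derivative_intros)
  have "(- f x) * exp (k * x) \<le> (- f y) * exp (k * y)"
    by (rule exp_cmp_inc[OF D' xy]) (use h in force)
  thus ?thesis by simp
qed

lemma exp_shift1: fixes a z k :: real shows "a \<le> z * exp k \<Longrightarrow> a * exp (-k) \<le> z"
proof -
  assume h: "a \<le> z * exp k"
  have "a * exp (-k) \<le> z * exp k * exp (-k)" using h by (intro mult_right_mono) auto
  also have "\<dots> = z" by (simp add: exp_minus)
  finally show ?thesis .
qed

lemma exp_shift2: fixes a z k :: real shows "z * exp k \<le> a \<Longrightarrow> z \<le> a * exp (-k)"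
proof -
  assume h: "z * exp k \<le> a"
  have "z = z * exp k * exp (-k)" by (simp add: exp_minus)
  also have "\<dots> \<le> a * exp (-k)" using h by (intro mult_right_mono) auto
  finally show ?thesis .
qed

lemma part3:
  fixes eps a s lam :: real and u u1 :: "real \<Rightarrow> real"
  assumes e: "eps > 0" and apos: "a > 0" and lam0: "lam > 0"
    and D0: "\<And>x. (u has_real_derivative u1 x) (at x)"
    and P2: "\<And>x. lam * (a^2 - (u x - s)^2) / eps \<le> - u1 x \<and> - u1 x \<le> (a^2 - (u x - s)^2) / eps"
    and bnd: "\<And>x. s - a \<le> u x \<and> u x \<le> s + a"
    and side1: "\<And>x. x \<ge> 0 \<Longrightarrow> u x \<le> s" and side2: "\<And>x. x \<le> 0 \<Longrightarrow> u x \<ge> s"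
    and u0: "u 0 = s"
  shows "(\<forall>x\<le>0. a * exp (-(2*a*\<bar>x\<bar>/eps)) \<le> (s+a) - u x \<and> (s+a) - u x \<le> a * exp (-(lam*a*\<bar>x\<bar>/eps)))
    \<and> (\<forall>x\<ge>0. a * exp (-(2*a*\<bar>x\<bar>/eps)) \<le> u x - (s-a) \<and> u x - (s-a) \<le> a * exp (-(lam*a*\<bar>x\<bar>/eps)))
    \<and> (\<forall>x. lam * a^2 / eps * exp (-(2*a*\<bar>x\<bar>/eps)) \<le> - u1 x \<and> - u1 x \<le> 2 * a^2 / eps * exp (-(lam*a*\<bar>x\<bar>/eps)))"
proof -
  have Qf: "a^2 - (u x - s)^2 = (a - (u x - s)) * (a + (u x - s))" for x
    by (simp add: power2_eq_square algebra_simps)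
  have Dz: "((\<lambda>t. u t - (s - a)) has_real_derivative u1 t) (at t)" for t
    using D0 by (auto intro!: derivative_eq_intros)
  have Dr: "((\<lambda>t. (s + a) - u t) has_real_derivative - u1 t) (at t)" for t
    using D0 by (auto intro!: derivative_eq_intros)
  have upQ: "- u1 t \<le> 2 * a * (a + (u t - s)) / eps" "- u1 t \<le> 2 * a * (a - (u t - s)) / eps" for t
  proof -
    have b: "s - a \<le> u t" "u t \<le> s + a" using bnd by auto
    have "(a - (u t - s)) * (a + (u t - s)) \<le> 2 * a * (a + (u t - s))"
      using b by (intro mult_right_mono) auto
    moreover have "(a - (u t - s)) * (a + (u t - s)) \<le> (a - (u t - s)) * (2 * a)"
      using b by (intro mult_left_mono) auto
    ultimately show "- u1 t \<le> 2 * a * (a + (u t - s)) / eps" "- u1 t \<le> 2 * a * (a - (u t - s)) / eps"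
      using P2[of t] Qf[of t] e by (auto simp: divide_right_mono algebra_simps intro: order_trans)
  qed
  have loQ1: "lam * a * (a + (u t - s)) / eps \<le> - u1 t" if "t \<ge> 0" for t
  proof -
    have b: "s - a \<le> u t" "u t \<le> s" using bnd side1 that by auto
    have "a * (a + (u t - s)) \<le> (a - (u t - s)) * (a + (u t - s))"
      using b by (intro mult_right_mono) auto
    hence "lam * (a * (a + (u t - s))) \<le> lam * ((a - (u t - s)) * (a + (u t - s)))"
      using lam0 by (intro mult_left_mono) auto
    hence "lam * a * (a + (u t - s)) \<le> lam * (a^2 - (u t - s)^2)" unfolding Qf by (simp add: mult.assoc)
    hence "lam * a * (a + (u t - s)) / eps \<le> lam * (a^2 - (u t - s)^2) / eps" using e by (simp add: divide_right_mono)
    thus ?thesis using P2[of t] by linarith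
  qed
  have loQ2: "lam * a * (a - (u t - s)) / eps \<le> - u1 t" if "t \<le> 0" for t
  proof -
    have b: "s \<le> u t" "u t \<le> s + a" using bnd side2 that by auto
    have "a * (a - (u t - s)) \<le> (a - (u t - s)) * (a + (u t - s))"
      using b mult_left_mono[of a "a + (u t - s)" "a - (u t - s)"] by (simp add: mult.commute)
    hence "lam * (a * (a - (u t - s))) \<le> lam * ((a - (u t - s)) * (a + (u t - s)))"
      using lam0 by (intro mult_left_mono) auto
    hence "lam * a * (a - (u t - s)) \<le> lam * (a^2 - (u t - s)^2)" unfolding Qf by (simp add: mult.assoc)
    hence "lam * a * (a - (u t - s)) / eps \<le> lam * (a^2 - (u t - s)^2) / eps" using e by (simp add: divide_right_mono)
    thus ?thesis using P2[of t] by linarith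
  qed
  define k1 where "k1 = 2 * a / eps"
  define k2 where "k2 = lam * a / eps"
  have k1pos: "k1 > 0" and k2pos: "k2 > 0" using e apos lam0 unfolding k1_def k2_def by auto
  have zlo: "a * exp (-(2*a*\<bar>x\<bar>/eps)) \<le> u x - (s-a)" if "x \<ge> 0" for x
  proof -
    have "(u 0 - (s-a)) * exp (k1 * 0) \<le> (u x - (s-a)) * exp (k1 * x)"
    proof (rule exp_cmp_inc[OF Dz that])
      fix t assume "0 \<le> t" "t \<le> x"
      have "k1 * (u t - (s - a)) = 2 * a * (a + (u t - s)) / eps" using e unfolding k1_def by (simp add: field_simps)
      thus "u1 t + k1 * (u t - (s - a)) \<ge> 0" using upQ(1)[of t] by linarith
    qed
    hence "a \<le> (u x - (s-a)) * exp (k1 * x)" using u0 by simp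
    from exp_shift1[OF this] show ?thesis using that unfolding k1_def by (simp add: mult.commute)
  qed
  have zup: "u x - (s-a) \<le> a * exp (-(lam*a*\<bar>x\<bar>/eps))" if "x \<ge> 0" for x
  proof -
    have "(u 0 - (s-a)) * exp (k2 * 0) \<ge> (u x - (s-a)) * exp (k2 * x)"
    proof (rule exp_cmp_dec[OF Dz that])
      fix t assume "0 \<le> t" "t \<le> x"
      have "k2 * (u t - (s - a)) = lam * a * (a + (u t - s)) / eps" using e unfolding k2_def by (simp add: field_simps)
      thus "u1 t + k2 * (u t - (s - a)) \<le> 0" using loQ1[of t] \<open>0 \<le> t\<close> by linarith
    qed
    hence "(u x - (s-a)) * exp (k2 * x) \<le> a" using u0 by simp
    from exp_shift2[OF this] show ?thesis using that unfolding k2_def by (simp add: mult.commute)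
  qed
  have rlo: "a * exp (-(2*a*\<bar>x\<bar>/eps)) \<le> (s+a) - u x" if "x \<le> 0" for x
  proof -
    have "((s+a) - u x) * exp ((-k1) * x) \<ge> ((s+a) - u 0) * exp ((-k1) * 0)"
    proof (rule exp_cmp_dec[OF Dr that])
      fix t assume "x \<le> t" "t \<le> 0"
      have "k1 * ((s + a) - u t) = 2 * a * (a - (u t - s)) / eps" using e unfolding k1_def by (simp add: field_simps)
      thus "- u1 t + (-k1) * ((s + a) - u t) \<le> 0" using upQ(2)[of t] by linarith
    qed
    hence "a \<le> ((s+a) - u x) * exp (k1 * \<bar>x\<bar>)" using u0 that by simp
    from exp_shift1[OF this] show ?thesis unfolding k1_def by (simp add: mult.commute)
  qed
  have rup: "(s+a) - u x \<le> a * exp (-(lam*a*\<bar>x\<bar>/eps))" if "x \<le> 0" for x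
  proof -
    have "((s+a) - u x) * exp ((-k2) * x) \<le> ((s+a) - u 0) * exp ((-k2) * 0)"
    proof (rule exp_cmp_inc[OF Dr that])
      fix t assume "x \<le> t" "t \<le> 0"
      have "k2 * ((s + a) - u t) = lam * a * (a - (u t - s)) / eps" using e unfolding k2_def by (simp add: field_simps)
      thus "- u1 t + (-k2) * ((s + a) - u t) \<ge> 0" using loQ2[of t] \<open>t \<le> 0\<close> by linarith
    qed
    hence "((s+a) - u x) * exp (k2 * \<bar>x\<bar>) \<le> a" using u0 that by simp
    from exp_shift2[OF this] show ?thesis unfolding k2_def by (simp add: mult.commute)
  qed
  have der: "lam * a^2 / eps * exp (-(2*a*\<bar>x\<bar>/eps)) \<le> - u1 x \<and> - u1 x \<le> 2 * a^2 / eps * exp (-(lam*a*\<bar>x\<bar>/eps))" for x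
  proof -
    define E1 where "E1 = exp (-(2*a*\<bar>x\<bar>/eps))"
    define E2 where "E2 = exp (-(lam*a*\<bar>x\<bar>/eps))"
    have eq1: "lam * a^2 / eps * E1 = lam * a * (a * E1) / eps" by (simp add: power2_eq_square)
    have eq2: "2 * a^2 / eps * E2 = 2 * a * (a * E2) / eps" by (simp add: power2_eq_square)
    have c: "lam * a * (a * E1) / eps \<le> lam * a * D / eps \<and> 2 * a * D / eps \<le> 2 * a * (a * E2) / eps"
      if "a * E1 \<le> D" "D \<le> a * E2" for D
    proof
      have "lam * a * (a * E1) \<le> lam * a * D" using that lam0 apos by (intro mult_left_mono) auto
      thus "lam * a * (a * E1) / eps \<le> lam * a * D / eps" using e by (simp add: divide_right_mono)
      have "2 * a * D \<le> 2 * a * (a * E2)" using that apos by (intro mult_left_mono) auto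
      thus "2 * a * D / eps \<le> 2 * a * (a * E2) / eps" using e by (simp add: divide_right_mono)
    qed
    show ?thesis
    proof (cases "x \<ge> 0")
      case True
      have "a + (u x - s) = u x - (s - a)" by simp
      thus ?thesis using c[OF zlo[OF True, folded E1_def] zup[OF True, folded E2_def]] upQ(1)[of x] loQ1[OF True]
        eq1 eq2 unfolding E1_def E2_def by (smt (verit))
    next
      case False
      hence F: "x \<le> 0" by simp
      have "a - (u x - s) = (s + a) - u x" by simp
      thus ?thesis using c[OF rlo[OF F, folded E1_def] rup[OF F, folded E2_def]] upQ(2)[of x] loQ2[OF F]
        eq1 eq2 unfolding E1_def E2_def by (smt (verit))
    qed
  qed
  show ?thesis using zlo zup rlo rup der by blast
qed

theorem theorem1p2:
  fixes eps delta um up :: real and u :: "real \<Rightarrow> real"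
  assumes "eps > 0" and "delta > 0" and "um > up"
    and "0 < delta * (um - up) / (2 * eps^2)" and "delta * (um - up) / (2 * eps^2) \<le> 1/4"
    and "vd_shock eps delta um up u"
    and "mono u \<or> antimono u"
    and "u 0 = (um + up) / 2"
  defines "lam_lo \<equiv> sqrt 2 - 1" and "lam_hi \<equiv> (1::real)"
  shows "(\<forall>x\<le>0. (um - up) / 2 * exp (- lam_hi * (um - up) * \<bar>x\<bar> / eps) \<le> um - u x \<and>
                  um - u x \<le> (um - up) / 2 * exp (- lam_lo * (um - up) * \<bar>x\<bar> / (2 * eps)))
       \<and> (\<forall>x\<ge>0. (um - up) / 2 * exp (- lam_hi * (um - up) * \<bar>x\<bar> / eps) \<le> u x - up \<and>
                  u x - up \<le> (um - up) / 2 * exp (- lam_lo * (um - up) * \<bar>x\<bar> / (2 * eps)))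
       \<and> (\<forall>x. lam_lo * (um - up)^2 / (4 * eps) * exp (- lam_hi * (um - up) * \<bar>x\<bar> / eps) \<le> - deriv u x \<and>
                  - deriv u x \<le> lam_hi * (um - up)^2 / (2 * eps) * exp (- lam_lo * (um - up) * \<bar>x\<bar> / (2 * eps)))"
  proof -
  note e = assms(1) and dl = assms(2) and uu = assms(3) and h5 = assms(5) and sh = assms(6)
    and mon = assms(7) and u0 = assms(8)
  define s where "s = (um + up)/2"
  define a where "a = (um - up)/2"
  define u1 where "u1 = deriv u"
  define u2 where "u2 = deriv u1"
  define u3 where "u3 = deriv u2"
  have apos: "a > 0" using uu a_def by simp
  have umeq: "um = s + a" and upeq: "up = s - a" using s_def a_def by simp_all
  have mu: "delta * a \<le> eps^2/4"
  proof -
    have "eps^2 > 0" using e by simp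
    hence "delta * (um - up) \<le> 1/4 * (2*eps^2)" using h5 by (simp add: divide_le_eq)
    thus ?thesis unfolding a_def by simp
  qed
  note shd = sh[unfolded vd_shock_def]
  have D0: "\<And>x. (u has_real_derivative u1 x) (at x)"
  proof -
    fix x
    have "(deriv ^^ 0) u differentiable (at x)" using shd by blast
    thus "(u has_real_derivative u1 x) (at x)"
      unfolding u1_def by (simp add: DERIV_deriv_iff_real_differentiable)
  qed
  have D1: "\<And>x. (u1 has_real_derivative u2 x) (at x)"
  proof -
    fix x
    have "(deriv ^^ 1) u differentiable (at x)" using shd by blast
    thus "(u1 has_real_derivative u2 x) (at x)"
      unfolding u1_def u2_def by (simp add: DERIV_deriv_iff_real_differentiable)
  qed
  have D2: "\<And>x. (u2 has_real_derivative u3 x) (at x)"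
  proof -
    fix x
    have "(deriv ^^ 2) u differentiable (at x)" using shd by blast
    thus "(u2 has_real_derivative u3 x) (at x)"
      unfolding u1_def u2_def u3_def by (simp add: numeral_2_eq_2 DERIV_deriv_iff_real_differentiable)
  qed
  have ode: "\<And>x. - s * u1 x + u x * u1 x = eps * u2 x - delta * u3 x"
    using shd unfolding s_def u1_def u2_def u3_def by (simp add: numeral_2_eq_2 numeral_3_eq_3)
  define H where "H x = (u x - s)^2/2 - eps * u1 x + delta * u2 x" for x
  have "(H has_real_derivative 0) (at x)" for x
  proof -
    have "(H has_real_derivative (2 * (u x - s) * u1 x / 2 - eps * u2 x + delta * u3 x)) (at x)"
      unfolding H_def[abs_def]
      by (auto intro!: derivative_eq_intros D0 D1 D2)
    moreover have "2 * (u x - s) * u1 x / 2 - eps * u2 x + delta * u3 x = 0"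
      using ode[of x] by (simp add: field_simps)
    ultimately show ?thesis by simp
  qed
  hence Hc: "H x = H 0" for x using DERIV_isconst_all by blast
  have lu: "(u \<longlongrightarrow> s - a) at_top" and lu1: "(u1 \<longlongrightarrow> 0) at_top"
    using shd upeq unfolding u1_def by auto
  have "((\<lambda>x. (H 0 - (u x - s)^2/2 + eps * u1 x) / delta) \<longlongrightarrow> (H 0 - (s - a - s)^2/2 + eps * 0)/delta) at_top"
    using dl by (intro tendsto_intros lu lu1) simp_all
  moreover have "(H 0 - (u x - s)^2/2 + eps * u1 x) / delta = u2 x" for x
    using Hc[of x] dl unfolding H_def by (simp add: field_simps)
  ultimately have "(u2 \<longlongrightarrow> (H 0 - a^2/2)/delta) at_top" by simp
  from deriv_lim_zero[OF D1 this lu1] dl have H0: "H 0 = a^2/2" by simp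
  have ode2: "delta * u2 x = eps * u1 x + (a^2 - (u x - s)^2)/2" for x
    using Hc[of x] H0 unfolding H_def diff_divide_distrib by linarith
  have lum: "(u \<longlongrightarrow> um) at_bot" and lup: "(u \<longlongrightarrow> up) at_top" using shd by auto
  have anti: "antimono u"
  proof -
    { assume m: "mono u"
      have "um \<le> u 0"
        by (rule tendsto_upperbound[OF lum]) (auto simp: eventually_at_bot_linorder intro!: exI[of _ 0] monoD[OF m])
      moreover have "u 0 \<le> up"
        by (rule tendsto_lowerbound[OF lup]) (auto simp: eventually_at_top_linorder intro!: exI[of _ 0] monoD[OF m])
      ultimately have False using uu by simp }
    thus ?thesis using mon by blast
  qed
  have bnd: "s - a \<le> u x \<and> u x \<le> s + a" for x
  proof
    have "up \<le> u x"
      by (rule tendsto_upperbound[OF lup]) (auto simp: eventually_at_top_linorder intro!: exI[of _ x] antimonoD[OF anti])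
    thus "s - a \<le> u x" using upeq by simp
    have "u x \<le> um"
      by (rule tendsto_lowerbound[OF lum]) (auto simp: eventually_at_bot_linorder intro!: exI[of _ x] antimonoD[OF anti])
    thus "u x \<le> s + a" using umeq by simp
  qed
  have side1: "x \<ge> 0 \<Longrightarrow> u x \<le> s" for x using antimonoD[OF anti, of 0 x] u0 s_def by simp
  have side2: "x \<le> 0 \<Longrightarrow> u x \<ge> s" for x using antimonoD[OF anti, of x 0] u0 s_def by simp
  have lam0: "lam_lo > 0" and lam1: "lam_lo < 1"
    unfolding lam_lo_def using sqrt2_less_2 by (auto simp: real_less_rsqrt)
  have P2: "lam_lo * (a^2 - (u x - s)^2) / eps \<le> - u1 x \<and> - u1 x \<le> (a^2 - (u x - s)^2) / eps" for x
    by (rule part2[OF assms(1,2) apos mu D0 D1 ode2 bnd lu lu1]) (simp add: lam_lo_def)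
  have u0': "u 0 = s" using u0 s_def by simp
  have R: "(\<forall>x\<le>0. a * exp (-(2*a*\<bar>x\<bar>/eps)) \<le> (s+a) - u x \<and> (s+a) - u x \<le> a * exp (-(lam_lo*a*\<bar>x\<bar>/eps)))
    \<and> (\<forall>x\<ge>0. a * exp (-(2*a*\<bar>x\<bar>/eps)) \<le> u x - (s-a) \<and> u x - (s-a) \<le> a * exp (-(lam_lo*a*\<bar>x\<bar>/eps)))
    \<and> (\<forall>x. lam_lo * a^2 / eps * exp (-(2*a*\<bar>x\<bar>/eps)) \<le> - u1 x \<and> - u1 x \<le> 2 * a^2 / eps * exp (-(lam_lo*a*\<bar>x\<bar>/eps)))"
    by (rule part3[OF assms(1) apos lam0 D0 P2 bnd side1 side2 u0'])
  have c1: "(um - up) / 2 = a" unfolding a_def ..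
  have c2: "- lam_hi * (um - up) * \<bar>x\<bar> / eps = -(2*a*\<bar>x\<bar>/eps)" for x
    using e unfolding lam_hi_def a_def by (simp add: field_simps)
  have c3: "- lam_lo * (um - up) * \<bar>x\<bar> / (2 * eps) = -(lam_lo*a*\<bar>x\<bar>/eps)" for x
    using e unfolding a_def by (simp add: field_simps)
  have c4: "lam_lo * (um - up)^2 / (4 * eps) = lam_lo * a^2 / eps"
    using e unfolding a_def by (simp add: field_simps power2_eq_square)
  have c5: "lam_hi * (um - up)^2 / (2 * eps) = 2 * a^2 / eps"
    using e unfolding a_def lam_hi_def by (simp add: field_simps power2_eq_square)
  have c6: "um - u x = (s+a) - u x" "u x - up = u x - (s-a)" for x using umeq upeq by simp_all
  show ?thesis unfolding c1 c2 c3 c4 c5 c6 u1_def[symmetric] using R by blast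
qed

end
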